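(* Let $T=(V,E)$ be a tree with $\mathrm{pthin}(T)=2$, and let $\sigma$ be an ordering of $V$ and $S=\{V^0,V^1\}$ a partition of $V$ that are strongly consistent. Let $v_1,v_2,v_3$ be vertices with $v_1<v_2<v_3$ and $\deg(v_2)=3$. Then either the unique simple path from $v_1$ to $v_3$ passes through $v_2$, or some vertex of that path is adjacent to $v_2$.
   Context: For a graph $G=(V,E)$, a linear ordering $<$ of $V$ and a partition of $V$ into classes are called strongly consistent if for every triple $r<s<t$ of vertices with $rt\in E$: if $r$ and $s$ belong to the same class then $st\in E$, and if $s$ and $t$ belong to the same class then $rs\in E$. The proper thinness $\mathrm{pthin}(G)$ is the minimum $k$ such that some ordering and some partition into $k$ classes are strongly consistent. *)

theory Defs
  imports Main "HOL-Library.Disjoint_Sets"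
begin

definition graph :: "'a set \<Rightarrow> ('a \<Rightarrow> 'a \<Rightarrow> bool) \<Rightarrow> bool" where
  "graph V E \<longleftrightarrow> finite V \<and> (\<forall>x y. E x y \<longrightarrow> x \<in> V \<and> y \<in> V \<and> x \<noteq> y \<and> E y x)"

definition degree :: "'a set \<Rightarrow> ('a \<Rightarrow> 'a \<Rightarrow> bool) \<Rightarrow> 'a \<Rightarrow> nat" where
  "degree V E v = card {u \<in> V. E v u}"

definition simple_path :: "'a set \<Rightarrow> ('a \<Rightarrow> 'a \<Rightarrow> bool) \<Rightarrow> 'a list \<Rightarrow> bool" where
  "simple_path V E p \<longleftrightarrow> p \<noteq> [] \<and> distinct p \<and> set p \<subseteq> V \<and>
     (\<forall>i. Suc i < length p \<longrightarrow> E (p ! i) (p ! Suc i))"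

definition connected_graph :: "'a set \<Rightarrow> ('a \<Rightarrow> 'a \<Rightarrow> bool) \<Rightarrow> bool" where
  "connected_graph V E \<longleftrightarrow> V \<noteq> {} \<and>
     (\<forall>x\<in>V. \<forall>y\<in>V. \<exists>p. simple_path V E p \<and> hd p = x \<and> last p = y)"

definition acyclic_graph :: "'a set \<Rightarrow> ('a \<Rightarrow> 'a \<Rightarrow> bool) \<Rightarrow> bool" where
  "acyclic_graph V E \<longleftrightarrow>
     \<not> (\<exists>p. simple_path V E p \<and> length p \<ge> 3 \<and> E (last p) (hd p))"

definition tree :: "'a set \<Rightarrow> ('a \<Rightarrow> 'a \<Rightarrow> bool) \<Rightarrow> bool" where
  "tree V E \<longleftrightarrow> graph V E \<and> connected_graph V E \<and> acyclic_graph V E"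

definition vertex_ordering :: "'a set \<Rightarrow> 'a rel \<Rightarrow> bool" where
  "vertex_ordering V ord \<longleftrightarrow> strict_linear_order_on V ord \<and> ord \<subseteq> V \<times> V"

definition strongly_consistent ::
  "'a set \<Rightarrow> ('a \<Rightarrow> 'a \<Rightarrow> bool) \<Rightarrow> 'a rel \<Rightarrow> 'a set set \<Rightarrow> bool" where
  "strongly_consistent V E ord P \<longleftrightarrow>
     (\<forall>r\<in>V. \<forall>s\<in>V. \<forall>t\<in>V. (r, s) \<in> ord \<and> (s, t) \<in> ord \<and> E r t \<longrightarrow>
        ((\<exists>X\<in>P. r \<in> X \<and> s \<in> X) \<longrightarrow> E s t) \<and>
        ((\<exists>X\<in>P. s \<in> X \<and> t \<in> X) \<longrightarrow> E r s))"

definition pthin :: "'a set \<Rightarrow> ('a \<Rightarrow> 'a \<Rightarrow> bool) \<Rightarrow> nat" where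
  "pthin V E = (LEAST k. \<exists>ord P. vertex_ordering V ord \<and> partition_on V P \<and>
       card P = k \<and> strongly_consistent V E ord P)"

end

theory Submission
  imports Defs
begin

lemma cross_lemma:
  "xs \<noteq> [] \<Longrightarrow> P (hd xs) \<Longrightarrow> \<not> P (last xs) \<Longrightarrow>
   \<exists>i. Suc i < length xs \<and> P (xs ! i) \<and> \<not> P (xs ! Suc i)"
proof (induction xs)
  case Nil then show ?case by simp
next
  case (Cons x xs)
  show ?case
  proof (cases xs)
    case Nil with Cons show ?thesis by simp
  next
    case (Cons y ys)
    show ?thesis
    proof (cases "P y")
      case True
      then obtain i where "Suc i < length xs" "P (xs ! i)" "\<not> P (xs ! Suc i)"
        using Cons.IH Cons.prems Cons by auto
      then show ?thesis by (intro exI[of _ "Suc i"]) auto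
    next
      case False
      then show ?thesis using Cons.prems Cons by (intro exI[of _ 0]) auto
    qed
  qed
qed

lemma triangle:
  assumes "graph V E" "acyclic_graph V E" "E x y" "E y z" "E z x"
  shows False
proof -
  have g: "x \<in> V" "y \<in> V" "z \<in> V" "x \<noteq> y" "y \<noteq> z" "z \<noteq> x"
    using assms unfolding graph_def by blast+
  have "simple_path V E [x,y,z]"
    unfolding simple_path_def using g assms(3,4)
    by (auto simp: less_Suc_eq nth_Cons')
  then show False using assms(2,5) unfolding acyclic_graph_def by force
qed

theorem corollaryA10:
  fixes V :: "'a set" and E :: "'a \<Rightarrow> 'a \<Rightarrow> bool" and \<sigma> :: "'a rel"
    and V0 V1 :: "'a set" and v1 v2 v3 :: 'a and p :: "'a list"
  assumes "tree V E"
    and "pthin V E = 2"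
    and "vertex_ordering V \<sigma>"
    and "partition_on V {V0, V1}"
    and "strongly_consistent V E \<sigma> {V0, V1}"
    and "v1 \<in> V" "v2 \<in> V" "v3 \<in> V"
    and "(v1, v2) \<in> \<sigma>" "(v2, v3) \<in> \<sigma>"
    and "degree V E v2 = 3"
    and "simple_path V E p" "hd p = v1" "last p = v3"
  shows "v2 \<in> set p \<or> (\<exists>u \<in> set p. E u v2)"
proof (rule ccontr)
  assume na: "\<not> (v2 \<in> set p \<or> (\<exists>u \<in> set p. E u v2))"
  have gr: "graph V E" and ac: "acyclic_graph V E" using assms(1) unfolding tree_def by auto
  have Esym: "\<And>x y. E x y \<Longrightarrow> E y x" and EV: "\<And>x y. E x y \<Longrightarrow> x \<in> V \<and> y \<in> V"
    and Eirr: "\<And>x. \<not> E x x"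
    using gr unfolding graph_def by blast+
  have so: "strict_linear_order_on V \<sigma>" "\<sigma> \<subseteq> V \<times> V" using assms(3) unfolding vertex_ordering_def by auto
  have tot: "\<And>x y. x \<in> V \<Longrightarrow> y \<in> V \<Longrightarrow> x \<noteq> y \<Longrightarrow> (x,y) \<in> \<sigma> \<or> (y,x) \<in> \<sigma>"
    using so(1) unfolding strict_linear_order_on_def total_on_def by blast
  have irr: "\<And>x. (x,x) \<notin> \<sigma>" using so(1) unfolding strict_linear_order_on_def irrefl_def by blast
  have trn: "\<And>x y z. (x,y) \<in> \<sigma> \<Longrightarrow> (y,z) \<in> \<sigma> \<Longrightarrow> (x,z) \<in> \<sigma>"
    using so(1) unfolding strict_linear_order_on_def trans_def by blast
  have asy: "\<And>x y. (x,y) \<in> \<sigma> \<Longrightarrow> (y,x) \<notin> \<sigma>" using trn irr by blast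
  have cov: "V0 \<union> V1 = V" and dis: "V0 \<inter> V1 = {} \<or> V0 = V1"
    using assms(4) unfolding partition_on_def disjoint_def by auto
  have same: "\<And>x y. x \<in> V \<Longrightarrow> y \<in> V \<Longrightarrow> (\<exists>X\<in>{V0,V1}. x \<in> X \<and> y \<in> X) \<longleftrightarrow> (x \<in> V0 \<longleftrightarrow> y \<in> V0)"
    using cov dis by auto
  have SC: "\<And>r s t. r \<in> V \<Longrightarrow> s \<in> V \<Longrightarrow> t \<in> V \<Longrightarrow> (r,s) \<in> \<sigma> \<Longrightarrow> (s,t) \<in> \<sigma> \<Longrightarrow> E r t \<Longrightarrow>
      ((r \<in> V0 \<longleftrightarrow> s \<in> V0) \<longrightarrow> E s t) \<and> ((s \<in> V0 \<longleftrightarrow> t \<in> V0) \<longrightarrow> E r s)"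
    using assms(5) same unfolding strongly_consistent_def by metis
  have sp: "p \<noteq> []" "set p \<subseteq> V" "\<And>i. Suc i < length p \<Longrightarrow> E (p ! i) (p ! Suc i)"
    using assms(12) unfolding simple_path_def by auto
  obtain i where i: "Suc i < length p" "(p ! i, v2) \<in> \<sigma>" "(p ! Suc i, v2) \<notin> \<sigma>"
    using cross_lemma[of p "\<lambda>x. (x, v2) \<in> \<sigma>"] sp(1) assms(9,10,13,14) asy by auto
  define a where "a = p ! i"
  define b where "b = p ! Suc i"
  have ap: "a \<in> set p" and bp: "b \<in> set p" using i unfolding a_def b_def by auto
  have aV: "a \<in> V" and bV: "b \<in> V" using ap bp sp(2) by auto
  have Eab: "E a b" using sp(3)[OF i(1)] unfolding a_def b_def .
  have av: "(a, v2) \<in> \<sigma>" using i a_def by simp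
  have vb: "(v2, b) \<in> \<sigma>" using i b_def tot bV assms(7) bp na by blast
  have nEa: "\<not> E a v2" "\<not> E v2 a" using ap na Esym by blast+
  have nEb: "\<not> E b v2" "\<not> E v2 b" using bp na Esym by blast+
  have ca: "\<not> (a \<in> V0 \<longleftrightarrow> v2 \<in> V0)" using SC[OF aV assms(7) bV av vb Eab] nEb by blast
  have cb: "\<not> (b \<in> V0 \<longleftrightarrow> v2 \<in> V0)" using SC[OF aV assms(7) bV av vb Eab] nEa by blast
  have nbr: "w \<in> V0 \<longleftrightarrow> v2 \<in> V0" if w: "E v2 w" for w
  proof -
    have wV: "w \<in> V" using EV w by blast
    have wa: "w \<noteq> a" using w nEa by blast
    have wb: "w \<noteq> b" using w nEb by blast
    have wv: "w \<noteq> v2" using w Eirr by blast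
    show ?thesis
    proof (cases "(w, a) \<in> \<sigma>")
      case True
      show ?thesis using SC[OF wV aV assms(7) True av Esym[OF w]] nEa ca by blast
    next
      case F1: False
      then have aw: "(a, w) \<in> \<sigma>" using tot wV aV wa by blast
      show ?thesis
      proof (cases "(b, w) \<in> \<sigma>")
        case True
        show ?thesis using SC[OF assms(7) bV wV vb True w] nEb cb by blast
      next
        case False
        then have wb': "(w, b) \<in> \<sigma>" using tot wV bV wb by blast
        show ?thesis
        proof (rule ccontr)
          assume "\<not> ?thesis"
          then have "E a w" "E w b" using SC[OF aV wV bV aw wb' Eab] ca cb by blast+
          then show False using triangle[OF gr ac \<open>E a w\<close> \<open>E w b\<close> Esym[OF Eab]] by blast
        qed
      qed
    qed
  qed
  have side: False if x: "E v2 x" and y: "E v2 y" and xy: "x \<noteq> y"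
    and s: "((x,v2) \<in> \<sigma> \<and> (y,v2) \<in> \<sigma>) \<or> ((v2,x) \<in> \<sigma> \<and> (v2,y) \<in> \<sigma>)" for x y
  proof -
    have xV: "x \<in> V" and yV: "y \<in> V" using EV x y by blast+
    have cx: "x \<in> V0 \<longleftrightarrow> v2 \<in> V0" and cy: "y \<in> V0 \<longleftrightarrow> v2 \<in> V0" using nbr x y by blast+
    have g: "\<And>x y. E v2 x \<Longrightarrow> E v2 y \<Longrightarrow> (x,y) \<in> \<sigma> \<Longrightarrow> (x,v2) \<in> \<sigma> \<and> (y,v2) \<in> \<sigma> \<or> (v2,x) \<in> \<sigma> \<and> (v2,y) \<in> \<sigma> \<Longrightarrow> False"
    proof -
      fix x y assume x: "E v2 x" and y: "E v2 y" and o: "(x,y) \<in> \<sigma>"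
        and s: "(x,v2) \<in> \<sigma> \<and> (y,v2) \<in> \<sigma> \<or> (v2,x) \<in> \<sigma> \<and> (v2,y) \<in> \<sigma>"
      have xV: "x \<in> V" and yV: "y \<in> V" using EV x y by blast+
      have cx: "x \<in> V0 \<longleftrightarrow> v2 \<in> V0" and cy: "y \<in> V0 \<longleftrightarrow> v2 \<in> V0" using nbr x y by blast+
      show False using s
      proof
        assume "(x,v2) \<in> \<sigma> \<and> (y,v2) \<in> \<sigma>"
        then have "E x y" using SC[OF xV yV assms(7) o _ Esym[OF x]] cy by blast
        then show False using triangle[OF gr ac \<open>E x y\<close> Esym[OF y] x] by blast
      next
        assume "(v2,x) \<in> \<sigma> \<and> (v2,y) \<in> \<sigma>"
        then have "E x y" using SC[OF assms(7) xV yV _ o y] cx by blast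
        then show False using triangle[OF gr ac x \<open>E x y\<close> Esym[OF y]] by blast
      qed
    qed
    show False using tot[OF xV yV xy] g[OF x y] g[OF y x] s by blast
  qed
  have "card {u \<in> V. E v2 u} = 3" using assms(11) unfolding degree_def .
  then obtain x y z where xyz: "{u \<in> V. E v2 u} = {x,y,z}" "x \<noteq> y" "y \<noteq> z" "x \<noteq> z"
    by (auto simp: card_3_iff)
  have E3: "E v2 x" "E v2 y" "E v2 z" using xyz(1) by blast+
  have sd: "\<And>w. E v2 w \<Longrightarrow> (w,v2) \<in> \<sigma> \<or> (v2,w) \<in> \<sigma>"
    using tot assms(7) EV Eirr by metis
  show False using sd[OF E3(1)] sd[OF E3(2)] sd[OF E3(3)] side E3 xyz(2-4) by metis
qed

end
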